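(* Let $m\ge 1$ and $n,k$ be positive integers. For $v=1,\dots,m$ let $X^{(v)}$ be a real $n\times p_v$ centered data matrix ($n$ samples, $p_v$ variables), let $X=[X^{(1)},\dots,X^{(m)}]$ be the $n\times p$ multiview data matrix with $p=p_1+\cdots+p_m$, and let $K^{(v)}=X^{(v)}{X^{(v)}}^T$. Let $X=UDV^T$ be a singular value decomposition of $X$ ($U$ an $n\times n$ orthogonal matrix, $V$ a $p\times p$ orthogonal matrix, $D$ an $n\times p$ rectangular diagonal matrix) with singular values ordered $\sigma_1\ge\sigma_2\ge\cdots$, so that the columns of $U$ are eigenvectors of $XX^T$ and the columns of $V$ are eigenvectors of $X^TX$ ordered by non-increasing eigenvalue. Let $U_k$ be the $n\times k$ matrix of the first $k$ columns of $U$, let $Q$ be an arbitrary $k\times k$ orthogonal matrix, and put $H=U_kQ$. Write $V^T=[{V^{(1)}}^T,\dots,{V^{(m)}}^T]$ where ${V^{(v)}}^T$ is the $p\times p_v$ block of columns of $V^T$ corresponding to the variables of view $v$, and let ${V_{1:k}^{(v)}}^T$ be the $k\times p_v$ matrix consisting of the top $k$ rows of ${V^{(v)}}^T$. Then for every $v=1,\dots,m$, $$\mathrm{tr}\big(H^TK^{(v)}H\big)=\mathrm{tr}\big({V_{1:k}^{(v)}}^T{X^{(v)}}^TX^{(v)}V_{1:k}^{(v)}\big)+\sum_{w\neq v}\mathrm{tr}\big({V_{1:k}^{(v)}}^T{X^{(v)}}^TX^{(w)}V_{1:k}^{(w)}\big).$$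
   Context: All matrices are real; $\mathrm{tr}$ denotes the trace. *)

theory Defs
  imports "Jordan_Normal_Form.Matrix"
begin

(* Views are indexed v = 0, ..., m-1 (the paper uses 1, ..., m). *)

definition mat_trace :: "real mat \<Rightarrow> real" where
  "mat_trace A = (\<Sum>i<dim_row A. A $$ (i,i))"

definition view_offset :: "(nat \<Rightarrow> nat) \<Rightarrow> nat \<Rightarrow> nat" where
  "view_offset p v = (\<Sum>w<v. p w)"

definition centered :: "real mat \<Rightarrow> bool" where
  "centered A \<longleftrightarrow> (\<forall>j<dim_col A. (\<Sum>i<dim_row A. A $$ (i,j)) = 0)"

(* X = [X^(0), ..., X^(m-1)], an n x (p 0 + ... + p (m-1)) matrix *)
definition multiview :: "nat \<Rightarrow> nat \<Rightarrow> (nat \<Rightarrow> nat) \<Rightarrow> (nat \<Rightarrow> real mat) \<Rightarrow> real mat" where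
  "multiview n m p Xs = mat n (\<Sum>w<m. p w)
     (\<lambda>(i,j). let v = (LEAST v. j < view_offset p (Suc v))
              in Xs v $$ (i, j - view_offset p v))"

definition orthogonal_real_mat :: "nat \<Rightarrow> real mat \<Rightarrow> bool" where
  "orthogonal_real_mat d A \<longleftrightarrow> A \<in> carrier_mat d d \<and>
     transpose_mat A * A = 1\<^sub>m d \<and> A * transpose_mat A = 1\<^sub>m d"

definition ordered_rect_diag :: "real mat \<Rightarrow> bool" where
  "ordered_rect_diag D \<longleftrightarrow>
     (\<forall>i<dim_row D. \<forall>j<dim_col D. i \<noteq> j \<longrightarrow> D $$ (i,j) = 0) \<and>
     (\<forall>i<min (dim_row D) (dim_col D). D $$ (i,i) \<ge> 0) \<and>
     (\<forall>i j. i \<le> j \<longrightarrow> j < min (dim_row D) (dim_col D) \<longrightarrow> D $$ (j,j) \<le> D $$ (i,i))"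

definition first_cols :: "nat \<Rightarrow> real mat \<Rightarrow> real mat" where
  "first_cols k A = mat (dim_row A) k (\<lambda>(i,j). A $$ (i,j))"

definition top_rows :: "nat \<Rightarrow> real mat \<Rightarrow> real mat" where
  "top_rows k A = mat k (dim_col A) (\<lambda>(i,j). A $$ (i,j))"

definition view_block_Vt :: "(nat \<Rightarrow> nat) \<Rightarrow> real mat \<Rightarrow> nat \<Rightarrow> real mat" where
  "view_block_Vt p V v = (let Vt = transpose_mat V in
     mat (dim_row Vt) (p v) (\<lambda>(i,j). Vt $$ (i, view_offset p v + j)))"

definition V_view_top :: "(nat \<Rightarrow> nat) \<Rightarrow> nat \<Rightarrow> real mat \<Rightarrow> nat \<Rightarrow> real mat" where
  "V_view_top p k V v = transpose_mat (top_rows k (view_block_Vt p V v))"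

end

theory Submission
  imports Defs
begin

lemma mult_entry:
  assumes "A \<in> carrier_mat a b" "B \<in> carrier_mat b c" "i < a" "j < c"
  shows "(A * B) $$ (i,j) = (\<Sum>l<b. A $$ (i,l) * B $$ (l,j))"
  using assms by (simp add: scalar_prod_def lessThan_atLeast0)

lemma mat_trace_comm:
  assumes "A \<in> carrier_mat a b" "B \<in> carrier_mat b a"
  shows "mat_trace (A * B) = mat_trace (B * A)"
proof -
  have "mat_trace (A * B) = (\<Sum>i<a. \<Sum>l<b. A $$ (i,l) * B $$ (l,i))"
    using assms by (simp add: mat_trace_def scalar_prod_def lessThan_atLeast0)
  also have "\<dots> = (\<Sum>l<b. \<Sum>i<a. B $$ (l,i) * A $$ (i,l))"
    by (subst sum.swap) (simp add: mult.commute)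
  also have "\<dots> = mat_trace (B * A)"
    using assms by (simp add: mat_trace_def scalar_prod_def lessThan_atLeast0)
  finally show ?thesis .
qed

lemma block_sum:
  "(\<Sum>w<m. \<Sum>j<p w. f (view_offset p w + j)) = (\<Sum>a<view_offset p m. (f a :: real))"
proof (induction m)
  case 0 then show ?case by (simp add: view_offset_def)
next
  case (Suc m)
  have o: "view_offset p (Suc m) = view_offset p m + p m" by (simp add: view_offset_def)
  have "(\<Sum>a<view_offset p m + p m. f a) = (\<Sum>a<view_offset p m. f a) + (\<Sum>j<p m. f (view_offset p m + j))"
  proof -
    have "(\<Sum>a<view_offset p m + p m. f a) = (\<Sum>a=0..<view_offset p m. f a) + (\<Sum>a=view_offset p m..<view_offset p m + p m. f a)"
      by (simp add: lessThan_atLeast0 sum.atLeastLessThan_concat)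
    also have "(\<Sum>a=view_offset p m..<view_offset p m + p m. f a) = (\<Sum>j=0..<p m. f (j + view_offset p m))"
      using sum.shift_bounds_nat_ivl[of f 0 "view_offset p m" "p m"] by (simp add: add.commute)
    finally show ?thesis by (simp add: lessThan_atLeast0 add.commute)
  qed
  then show ?case using Suc o by simp
qed

lemma offset_mono: "v \<le> w \<Longrightarrow> view_offset p v \<le> view_offset p w"
  unfolding view_offset_def by (rule sum_mono2) auto

lemma multiview_entry:
  assumes "\<And>v. v < m \<Longrightarrow> p v > 0" "v < m" "j < p v" "l < n"
  shows "multiview n m p Xs $$ (l, view_offset p v + j) = Xs v $$ (l, j)"
proof -
  have ov: "view_offset p (Suc v) = view_offset p v + p v" by (simp add: view_offset_def)
  have lt: "view_offset p v + j < (\<Sum>w<m. p w)"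
    using offset_mono[of "Suc v" m p] ov assms by (simp add: view_offset_def)
  have "(LEAST u. view_offset p v + j < view_offset p (Suc u)) = v"
  proof (rule Least_equality)
    show "view_offset p v + j < view_offset p (Suc v)" using ov assms by simp
  next
    fix u assume "view_offset p v + j < view_offset p (Suc u)"
    then show "v \<le> u" using offset_mono[of "Suc u" v p]
      by (metis le_add1 not_less not_less_eq_eq order.trans)
  qed
  then show ?thesis using lt assms unfolding multiview_def by simp
qed
theorem proposition1:
  fixes m n k :: nat and p :: "nat \<Rightarrow> nat" and Xs :: "nat \<Rightarrow> real mat"
    and U D V Q :: "real mat"
  assumes "m \<ge> 1" and "n > 0" and "k > 0"
    and "\<And>v. v < m \<Longrightarrow> p v > 0"
    and "\<And>v. v < m \<Longrightarrow> Xs v \<in> carrier_mat n (p v)"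
    and "\<And>v. v < m \<Longrightarrow> centered (Xs v)"
    and "k \<le> n" and "k \<le> (\<Sum>w<m. p w)"
    and "orthogonal_real_mat n U"
    and "orthogonal_real_mat (\<Sum>w<m. p w) V"
    and "D \<in> carrier_mat n (\<Sum>w<m. p w)" and "ordered_rect_diag D"
    and "multiview n m p Xs = U * D * transpose_mat V"
    and "orthogonal_real_mat k Q"
  shows "\<forall>v<m.
     (let H = first_cols k U * Q;
          K = Xs v * transpose_mat (Xs v);
          Vv = V_view_top p k V v
      in mat_trace (transpose_mat H * K * H) =
         mat_trace (transpose_mat Vv * transpose_mat (Xs v) * Xs v * Vv)
         + (\<Sum>w\<in>{..<m} - {v}.
              mat_trace (transpose_mat Vv * transpose_mat (Xs v) * Xs w * V_view_top p k V w)))"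
  proof (intro allI impI)
  fix v assume vm: "v < m"
  define P where "P = (\<Sum>w<m. p w)"
  define X where "X = multiview n m p Xs"
  define ov where "ov = view_offset p v"
  define s where "s i = D $$ (i,i)" for i
  have PO: "view_offset p m = P" by (simp add: P_def view_offset_def)
  have offle: "view_offset p w + p w \<le> P" if "w < m" for w
    using offset_mono[of "Suc w" m p] that PO by (simp add: view_offset_def)
  have U: "U \<in> carrier_mat n n" and UtU: "transpose_mat U * U = 1\<^sub>m n"
    using assms(9) by (auto simp: orthogonal_real_mat_def)
  have V: "V \<in> carrier_mat P P" and VtV: "transpose_mat V * V = 1\<^sub>m P"
    using assms(10) by (auto simp: orthogonal_real_mat_def P_def)
  have Q: "Q \<in> carrier_mat k k" and QQt: "Q * transpose_mat Q = 1\<^sub>m k"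
    using assms(14) by (auto simp: orthogonal_real_mat_def)
  have D: "D \<in> carrier_mat n P" using assms(11) by (simp add: P_def)
  have Dd: "D $$ (i,j) = 0" if "i < n" "j < P" "i \<noteq> j" for i j
    using assms(12) D that by (auto simp: ordered_rect_diag_def)
  have X: "X \<in> carrier_mat n P" by (simp add: X_def multiview_def P_def)
  have Xeq: "X = U * D * transpose_mat V" using assms(13) by (simp add: X_def)
  have Xs: "Xs w \<in> carrier_mat n (p w)" if "w < m" for w using assms(5) that by simp
  have Xent: "Xs w $$ (l,j) = X $$ (l, view_offset p w + j)" if "w < m" "j < p w" "l < n" for w j l
    using multiview_entry[of m p w j l n Xs, OF assms(4) that(1,2,3)] by (simp add: X_def)
  have kn: "k \<le> n" and kP: "k \<le> P" using assms(7,8) by (auto simp: P_def)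
  have XtU: "transpose_mat X * U = V * transpose_mat D"
  proof -
    have DV: "D * transpose_mat V \<in> carrier_mat n P" using D V by simp
    have "transpose_mat X = transpose_mat (U * (D * transpose_mat V))" using U D V by (simp add: Xeq)
    also have "\<dots> = transpose_mat (D * transpose_mat V) * transpose_mat U"
      by (rule transpose_mult[OF U DV])
    also have "transpose_mat (D * transpose_mat V) = V * transpose_mat D"
      using transpose_mult[OF D, of "transpose_mat V" P] V by simp
    finally have "transpose_mat X * U = (V * transpose_mat D * transpose_mat U) * U" by simp
    also have "\<dots> = V * (transpose_mat D * (transpose_mat U * U))"
      using assoc_mult_mat[of V P P "transpose_mat D * transpose_mat U" n U n]
        assoc_mult_mat[of "transpose_mat D" P n "transpose_mat U" n U n] U D V by auto
    finally have "transpose_mat X * U = V * (transpose_mat D * (transpose_mat U * U))" .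
    then show ?thesis using UtU D by simp
  qed
  have XV: "X * V = U * D"
  proof -
    have "X * V = (U * D) * (transpose_mat V * V)" unfolding Xeq
      using assoc_mult_mat[of "U * D" n P "transpose_mat V" P V P] U D V by simp
    then show ?thesis using VtV U D by simp
  qed
  have ent1: "(transpose_mat X * U) $$ (a,i) = V $$ (a,i) * s i" if "a < P" "i < k" for a i
  proof -
    have "(V * transpose_mat D) $$ (a,i) = (\<Sum>c<P. V $$ (a,c) * transpose_mat D $$ (c,i))"
      using V D that kn kP by (intro mult_entry[of _ P P _ n]) auto
    also have "\<dots> = (\<Sum>c<P. if c = i then V $$ (a,i) * s i else 0)"
      using D that kn kP Dd by (intro sum.cong) (auto simp: s_def)
    also have "\<dots> = V $$ (a,i) * s i" using that kP by simp
    finally show ?thesis using XtU by simp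
  qed
  have ent2: "(X * V) $$ (l,i) = U $$ (l,i) * s i" if "l < n" "i < k" for l i
  proof -
    have "(U * D) $$ (l,i) = (\<Sum>c<n. U $$ (l,c) * D $$ (c,i))"
      using U D that kn kP by (intro mult_entry[of _ n n _ P]) auto
    also have "\<dots> = (\<Sum>c<n. if c = i then U $$ (l,i) * s i else 0)"
      using D that kn kP Dd by (intro sum.cong) (auto simp: s_def)
    also have "\<dots> = U $$ (l,i) * s i" using that kn by simp
    finally show ?thesis using XV by simp
  qed
  have VT: "V_view_top p k V w \<in> carrier_mat (p w) k" for w
    using V by (simp add: V_view_top_def top_rows_def view_block_Vt_def Let_def)
  have VTent: "V_view_top p k V w $$ (j,i) = V $$ (view_offset p w + j, i)"
    if "w < m" "j < p w" "i < k" for w j i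
    using V that kP offle[OF that(1)] by (simp add: V_view_top_def top_rows_def view_block_Vt_def Let_def)
  define E where "E = (\<Sum>i<k. \<Sum>j<p v. (V $$ (ov + j, i) * s i) * (V $$ (ov + j, i) * s i))"
  define Uk where "Uk = first_cols k U"
  have Uk: "Uk \<in> carrier_mat n k" using U by (simp add: Uk_def first_cols_def)
  have Ukent: "Uk $$ (l,i) = U $$ (l,i)" if "l < n" "i < k" for l i
    using U that by (simp add: Uk_def first_cols_def)
  define Xv where "Xv = Xs v"
  have Xv: "Xv \<in> carrier_mat n (p v)" using Xs[OF vm] by (simp add: Xv_def)
  have ovP: "ov + p v \<le> P" using offle[OF vm] by (simp add: ov_def)
  have XtUent: "(\<Sum>l<n. X $$ (l, ov + j) * U $$ (l,i)) = V $$ (ov + j, i) * s i"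
    if "j < p v" "i < k" for j i
  proof -
    have "(transpose_mat X * U) $$ (ov + j, i) = (\<Sum>l<n. transpose_mat X $$ (ov + j, l) * U $$ (l,i))"
      using X U that kn ovP by (intro mult_entry[of _ P n _ n]) auto
    also have "\<dots> = (\<Sum>l<n. X $$ (l, ov + j) * U $$ (l,i))"
      using X that ovP by (intro sum.cong) auto
    finally show ?thesis using ent1[of "ov + j" i] that ovP by simp
  qed
  define G where "G = transpose_mat Xv * Uk"
  have G: "G \<in> carrier_mat (p v) k" using Xv Uk by (simp add: G_def)
  have Gent: "G $$ (j,i) = V $$ (ov + j, i) * s i" if "j < p v" "i < k" for j i
  proof -
    have "G $$ (j,i) = (\<Sum>l<n. transpose_mat Xv $$ (j, l) * Uk $$ (l,i))"
      unfolding G_def using Xv Uk that by (intro mult_entry[of _ "p v" n _ k]) auto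
    also have "\<dots> = (\<Sum>l<n. X $$ (l, ov + j) * U $$ (l,i))"
      using Xv that Ukent Xent[OF vm] by (intro sum.cong) (auto simp: Xv_def ov_def)
    finally show ?thesis using XtUent that by simp
  qed
  define M where "M = transpose_mat G * G"
  have M: "M \<in> carrier_mat k k" using G by (simp add: M_def)
  have GT: "transpose_mat G = transpose_mat Uk * Xv"
    using transpose_mult[of "transpose_mat Xv" "p v" n Uk k] Xv Uk by (simp add: G_def)
  have QT: "transpose_mat Q \<in> carrier_mat k k" using Q by simp
  have UkT: "transpose_mat Uk \<in> carrier_mat k n" using Uk by simp
  have XvT: "transpose_mat Xv \<in> carrier_mat (p v) n" using Xv by simp
  have HT: "transpose_mat (Uk * Q) = transpose_mat Q * transpose_mat Uk"
    using transpose_mult[OF Uk Q] .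
  have R: "transpose_mat Uk * Xv \<in> carrier_mat k (p v)" using Uk Xv by simp
  have KK: "Xv * transpose_mat Xv \<in> carrier_mat n n" using Xv by simp
  have UkQ: "Uk * Q \<in> carrier_mat n k" using Uk Q by simp
  have lhs1: "transpose_mat (Uk * Q) * (Xv * transpose_mat Xv) * (Uk * Q) = transpose_mat Q * (M * Q)"
  proof -
    have "transpose_mat (Uk * Q) * (Xv * transpose_mat Xv) * (Uk * Q)
        = transpose_mat Q * transpose_mat Uk * (Xv * transpose_mat Xv) * (Uk * Q)" by (simp add: HT)
    also have "\<dots> = transpose_mat Q * (transpose_mat Uk * (Xv * transpose_mat Xv)) * (Uk * Q)"
      by (simp add: assoc_mult_mat[OF QT UkT KK])
    also have "\<dots> = transpose_mat Q * ((transpose_mat Uk * (Xv * transpose_mat Xv)) * (Uk * Q))"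
      using assoc_mult_mat[OF QT mult_carrier_mat[OF UkT KK] UkQ] by simp
    also have "transpose_mat Uk * (Xv * transpose_mat Xv) = (transpose_mat Uk * Xv) * transpose_mat Xv"
      using assoc_mult_mat[OF UkT Xv XvT] by simp
    also have "(transpose_mat Uk * Xv) * transpose_mat Xv * (Uk * Q) = (transpose_mat Uk * Xv) * (transpose_mat Xv * (Uk * Q))"
      using assoc_mult_mat[OF R XvT UkQ] by simp
    also have "transpose_mat Xv * (Uk * Q) = (transpose_mat Xv * Uk) * Q"
      using assoc_mult_mat[OF XvT Uk Q] by simp
    also have "(transpose_mat Uk * Xv) * ((transpose_mat Xv * Uk) * Q) = ((transpose_mat Uk * Xv) * (transpose_mat Xv * Uk)) * Q"
      using assoc_mult_mat[OF R mult_carrier_mat[OF XvT Uk] Q] by simp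
    finally show ?thesis unfolding M_def GT by (simp add: G_def)
  qed
  have lhs2: "mat_trace (transpose_mat Q * (M * Q)) = mat_trace M"
  proof -
    have "mat_trace (transpose_mat Q * (M * Q)) = mat_trace ((M * Q) * transpose_mat Q)"
      using mat_trace_comm[OF QT mult_carrier_mat[OF M Q]] .
    also have "(M * Q) * transpose_mat Q = M * (Q * transpose_mat Q)"
      using assoc_mult_mat[OF M Q QT] .
    finally show ?thesis using QQt M by simp
  qed
  have lhs3: "mat_trace M = E"
  proof -
    have "mat_trace M = (\<Sum>i<k. \<Sum>j<p v. transpose_mat G $$ (i,j) * G $$ (j,i))"
      unfolding mat_trace_def using M G
      by (intro sum.cong) (auto simp: M_def scalar_prod_def lessThan_atLeast0)
    also have "\<dots> = E" unfolding E_def using G Gent by (intro sum.cong) auto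
    finally show ?thesis .
  qed
  define Vv where "Vv = V_view_top p k V v"
  define A where "A = transpose_mat Vv * transpose_mat Xv"
  have A: "A \<in> carrier_mat k n" using VT[of v] Xv by (simp add: A_def Vv_def)
  have Aent: "A $$ (i,l) = (\<Sum>j<p v. V $$ (ov + j, i) * X $$ (l, ov + j))" if "i < k" "l < n" for i l
  proof -
    have "A $$ (i,l) = (\<Sum>j<p v. transpose_mat Vv $$ (i,j) * transpose_mat Xv $$ (j,l))"
      unfolding A_def using VT[of v] Xv that by (intro mult_entry[of _ k "p v" _ n]) (auto simp: Vv_def)
    also have "\<dots> = (\<Sum>j<p v. V $$ (ov + j, i) * X $$ (l, ov + j))"
      using VT[of v] Xv that VTent[OF vm] Xent[OF vm] by (intro sum.cong) (auto simp: Vv_def Xv_def ov_def)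
    finally show ?thesis .
  qed
  define T where "T w = mat_trace (transpose_mat Vv * transpose_mat Xv * Xs w * V_view_top p k V w)" for w
  have Tw: "T w = (\<Sum>i<k. \<Sum>l<n. A $$ (i,l) * (\<Sum>j<p w. X $$ (l, view_offset p w + j) * V $$ (view_offset p w + j, i)))"
    if wm: "w < m" for w
  proof -
    have XW: "Xs w * V_view_top p k V w \<in> carrier_mat n k" using Xs[OF wm] VT[of w] by simp
    have "T w = mat_trace (A * (Xs w * V_view_top p k V w))"
      unfolding T_def A_def[symmetric] using assoc_mult_mat[OF A Xs[OF wm] VT[of w]] by simp
    also have "\<dots> = (\<Sum>i<k. \<Sum>l<n. A $$ (i,l) * (Xs w * V_view_top p k V w) $$ (l,i))"
      unfolding mat_trace_def using A XW
      by (intro sum.cong) (auto intro!: mult_entry[of _ k n _ k])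
    also have "\<dots> = (\<Sum>i<k. \<Sum>l<n. A $$ (i,l) * (\<Sum>j<p w. X $$ (l, view_offset p w + j) * V $$ (view_offset p w + j, i)))"
    proof (intro sum.cong refl)
      fix i l assume i: "i \<in> {..<k}" and l: "l \<in> {..<n}"
      have "(Xs w * V_view_top p k V w) $$ (l,i) = (\<Sum>j<p w. Xs w $$ (l,j) * V_view_top p k V w $$ (j,i))"
        using Xs[OF wm] VT[of w] i l by (intro mult_entry[of _ n "p w" _ k]) auto
      also have "\<dots> = (\<Sum>j<p w. X $$ (l, view_offset p w + j) * V $$ (view_offset p w + j, i))"
        using i l Xent[OF wm] VTent[OF wm] by (intro sum.cong) auto
      finally show "A $$ (i,l) * (Xs w * V_view_top p k V w) $$ (l,i) = A $$ (i,l) * (\<Sum>j<p w. X $$ (l, view_offset p w + j) * V $$ (view_offset p w + j, i))"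
        by simp
    qed
    finally show ?thesis .
  qed
  have rhs: "(\<Sum>w<m. T w) = E"
  proof -
    have "(\<Sum>w<m. T w) = (\<Sum>w<m. \<Sum>i<k. \<Sum>l<n. A $$ (i,l) * (\<Sum>j<p w. X $$ (l, view_offset p w + j) * V $$ (view_offset p w + j, i)))"
      using Tw by simp
    also have "\<dots> = (\<Sum>i<k. \<Sum>l<n. A $$ (i,l) * (\<Sum>w<m. \<Sum>j<p w. X $$ (l, view_offset p w + j) * V $$ (view_offset p w + j, i)))"
      by (simp add: sum.swap[of _ "{..<m}"] sum_distrib_left)
    also have "\<dots> = (\<Sum>i<k. \<Sum>l<n. A $$ (i,l) * (\<Sum>a<P. X $$ (l, a) * V $$ (a, i)))"
      by (intro sum.cong refl) (simp add: block_sum[where f="\<lambda>a. X $$ (_, a) * V $$ (a, _)"] PO)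
    also have "\<dots> = (\<Sum>i<k. \<Sum>l<n. A $$ (i,l) * (U $$ (l,i) * s i))"
    proof (intro sum.cong refl)
      fix i l assume i: "i \<in> {..<k}" and l: "l \<in> {..<n}"
      have "(X * V) $$ (l,i) = (\<Sum>a<P. X $$ (l, a) * V $$ (a, i))"
        using X V i l kP by (intro mult_entry[of _ n P _ P]) auto
      then show "A $$ (i,l) * (\<Sum>a<P. X $$ (l, a) * V $$ (a, i)) = A $$ (i,l) * (U $$ (l,i) * s i)"
        using ent2 i l by simp
    qed
    also have "\<dots> = (\<Sum>i<k. \<Sum>j<p v. V $$ (ov + j, i) * s i * (\<Sum>l<n. X $$ (l, ov + j) * U $$ (l,i)))"
    proof (rule sum.cong[OF refl])
      fix i assume i: "i \<in> {..<k}"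
      have "(\<Sum>l<n. A $$ (i,l) * (U $$ (l,i) * s i)) = (\<Sum>l<n. \<Sum>j<p v. V $$ (ov + j, i) * X $$ (l, ov + j) * (U $$ (l,i) * s i))"
        using Aent i by (simp add: sum_distrib_right)
      also have "\<dots> = (\<Sum>j<p v. V $$ (ov + j, i) * s i * (\<Sum>l<n. X $$ (l, ov + j) * U $$ (l,i)))"
        by (subst sum.swap) (simp add: sum_distrib_left mult_ac)
      finally show "(\<Sum>l<n. A $$ (i,l) * (U $$ (l,i) * s i)) = (\<Sum>j<p v. V $$ (ov + j, i) * s i * (\<Sum>l<n. X $$ (l, ov + j) * U $$ (l,i)))" .
    qed
    also have "\<dots> = E" unfolding E_def using XtUent by simp
    finally show ?thesis .
  qed
  have "mat_trace (transpose_mat Vv * transpose_mat Xv * Xv * Vv)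
         + (\<Sum>w\<in>{..<m} - {v}. T w) = (\<Sum>w<m. T w)"
    using sum.remove[of "{..<m}" v T] vm by (simp add: T_def Xv_def Vv_def)
  then show "let H = first_cols k U * Q; K = Xs v * transpose_mat (Xs v); Vv = V_view_top p k V v
      in mat_trace (transpose_mat H * K * H) =
         mat_trace (transpose_mat Vv * transpose_mat (Xs v) * Xs v * Vv)
         + (\<Sum>w\<in>{..<m} - {v}.
              mat_trace (transpose_mat Vv * transpose_mat (Xs v) * Xs w * V_view_top p k V w))"
    using lhs1 lhs2 lhs3 rhs by (simp add: Let_def Uk_def Xv_def Vv_def T_def)
qed

end
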